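(* Let $0\to E_1\to E_2\to E_3\to0$ be an exact sequence of $\mathfrak b_I$-modules (each a direct sum of $\mathfrak t$-weight spaces), and suppose that no weight of $E_1$ is contained in $\Delta_I^+\cup\{0\}$. Then the induced map $E_2^{\mathfrak b_I}\to E_3^{\mathfrak b_I}$ on $\mathfrak b_I$-invariants is an isomorphism.
   Context: $G$ is a connected semisimple algebraic group over $\mathbb C$, $B$ a Borel subgroup, $T\subset B$ a maximal torus with Lie algebra $\mathfrak t$, $\Delta^+$ the positive roots with respect to $B$. $I$ is a set of simple roots, $\Delta_I^+$ the positive roots lying in $\operatorname{Span}_{\mathbb Z}I$, $G_I$ the Levi subgroup containing $T$ of the parabolic subgroup $P_I\supseteq B$ associated to $I$, $B_I=G_I\cap B$, and $\mathfrak b_I=\operatorname{Lie}(B_I)=\mathfrak t\oplus\bigoplus_{\alpha\in\Delta_I^+}\mathfrak g^\alpha$. *)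

theory Defs
  imports Complex_Main
begin

definition lie_algebra :: "(complex \<Rightarrow> 'b::ab_group_add \<Rightarrow> 'b) \<Rightarrow> ('b \<Rightarrow> 'b \<Rightarrow> 'b) \<Rightarrow> bool" where
  "lie_algebra sc br \<longleftrightarrow>
     vector_space sc \<and>
     (\<forall>x. Vector_Spaces.linear sc sc (br x)) \<and>
     (\<forall>y. Vector_Spaces.linear sc sc (\<lambda>x. br x y)) \<and>
     (\<forall>x. br x x = 0) \<and>
     (\<forall>x y z. br x (br y z) + br y (br z x) + br z (br x y) = 0)"

definition lie_module ::
  "(complex \<Rightarrow> 'b::ab_group_add \<Rightarrow> 'b) \<Rightarrow> ('b \<Rightarrow> 'b \<Rightarrow> 'b) \<Rightarrow>
   (complex \<Rightarrow> 'e::ab_group_add \<Rightarrow> 'e) \<Rightarrow> ('b \<Rightarrow> 'e \<Rightarrow> 'e) \<Rightarrow> bool" where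
  "lie_module sc br se rho \<longleftrightarrow>
     vector_space se \<and>
     (\<forall>x. Vector_Spaces.linear se se (rho x)) \<and>
     (\<forall>x y v. rho (x + y) v = rho x v + rho y v) \<and>
     (\<forall>c x v. rho (sc c x) v = se c (rho x v)) \<and>
     (\<forall>x y v. rho (br x y) v = rho x (rho y v) - rho y (rho x v))"

definition lie_module_hom ::
  "(complex \<Rightarrow> 'e1::ab_group_add \<Rightarrow> 'e1) \<Rightarrow> ('b \<Rightarrow> 'e1 \<Rightarrow> 'e1) \<Rightarrow>
   (complex \<Rightarrow> 'e2::ab_group_add \<Rightarrow> 'e2) \<Rightarrow> ('b \<Rightarrow> 'e2 \<Rightarrow> 'e2) \<Rightarrow> ('e1 \<Rightarrow> 'e2) \<Rightarrow> bool" where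
  "lie_module_hom se1 rho1 se2 rho2 f \<longleftrightarrow>
     Vector_Spaces.linear se1 se2 f \<and> (\<forall>x v. f (rho1 x v) = rho2 x (f v))"

text \<open>Weight space E_lambda for the action of the subspace t (lambda is only
  evaluated on t).\<close>
definition weight_space ::
  "(complex \<Rightarrow> 'e::ab_group_add \<Rightarrow> 'e) \<Rightarrow> ('b \<Rightarrow> 'e \<Rightarrow> 'e) \<Rightarrow> 'b set \<Rightarrow> ('b \<Rightarrow> complex) \<Rightarrow> 'e set" where
  "weight_space se rho t lam = {v. \<forall>h\<in>t. rho h v = se (lam h) v}"

definition weight_module ::
  "(complex \<Rightarrow> 'e::ab_group_add \<Rightarrow> 'e) \<Rightarrow> ('b \<Rightarrow> 'e \<Rightarrow> 'e) \<Rightarrow> 'b set \<Rightarrow> bool" where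
  "weight_module se rho t \<longleftrightarrow> module.span se (\<Union>lam. weight_space se rho t lam) = UNIV"

definition is_weight ::
  "(complex \<Rightarrow> 'e::ab_group_add \<Rightarrow> 'e) \<Rightarrow> ('b \<Rightarrow> 'e \<Rightarrow> 'e) \<Rightarrow> 'b set \<Rightarrow> ('b \<Rightarrow> complex) \<Rightarrow> bool" where
  "is_weight se rho t lam \<longleftrightarrow> (\<exists>v\<in>weight_space se rho t lam. v \<noteq> 0)"

definition invariants :: "('b \<Rightarrow> 'e::ab_group_add \<Rightarrow> 'e) \<Rightarrow> 'e set" where
  "invariants rho = {v. \<forall>x. rho x v = 0}"

definition root_space ::
  "(complex \<Rightarrow> 'b::ab_group_add \<Rightarrow> 'b) \<Rightarrow> ('b \<Rightarrow> 'b \<Rightarrow> 'b) \<Rightarrow> 'b set \<Rightarrow> ('b \<Rightarrow> complex) \<Rightarrow> 'b set" where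
  "root_space sc br t alpha = {x. \<forall>h\<in>t. br h x = sc (alpha h) x}"

text \<open>Two functionals agree on t (equality of elements of t-dual).\<close>
definition eq_on :: "'b set \<Rightarrow> ('b \<Rightarrow> complex) \<Rightarrow> ('b \<Rightarrow> complex) \<Rightarrow> bool" where
  "eq_on t lam mu \<longleftrightarrow> (\<forall>h\<in>t. lam h = mu h)"

text \<open>The Lie algebra has the shape of b_I: b = t (+) sum of root spaces g^alpha,
  alpha in R (= Delta_I^+), with t an abelian subalgebra and the roots nonzero
  linear functionals on t.\<close>
definition borel_type ::
  "(complex \<Rightarrow> 'b::ab_group_add \<Rightarrow> 'b) \<Rightarrow> ('b \<Rightarrow> 'b \<Rightarrow> 'b) \<Rightarrow> 'b set \<Rightarrow> ('b \<Rightarrow> complex) set \<Rightarrow> bool" where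
  "borel_type sc br t R \<longleftrightarrow>
     module.subspace sc t \<and>
     (\<forall>h\<in>t. \<forall>h'\<in>t. br h h' = 0) \<and>
     finite R \<and>
     (\<forall>alpha\<in>R. \<forall>h\<in>t. \<forall>h'\<in>t. alpha (h + h') = alpha h + alpha h') \<and>
     (\<forall>alpha\<in>R. \<forall>c. \<forall>h\<in>t. alpha (sc c h) = c * alpha h) \<and>
     (\<forall>alpha\<in>R. \<exists>h\<in>t. alpha h \<noteq> 0) \<and>
     module.span sc (t \<union> (\<Union>alpha\<in>R. root_space sc br t alpha)) = UNIV"

end

theory Submission
  imports Defs
begin

lemma ws_subspace:
  assumes V: "vector_space se" and L: "\<forall>h. Vector_Spaces.linear se se (rho h)"
  shows "module.subspace se (weight_space se rho t lam)"
proof -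
  interpret V: vector_space se by (rule V)
  have ad: "rho h (x + y) = rho h x + rho h y" "rho h (se c x) = se c (rho h x)" for h x y c
    using L by (auto simp: Vector_Spaces.linear_iff)
  have z: "rho h 0 = 0" for h using ad(1)[of h 0 0] by simp
  show ?thesis
    unfolding V.subspace_def weight_space_def
    by (auto simp: ad z V.scale_right_distrib V.scale_left_commute)
qed

lemma key:
  fixes se2 :: "complex \<Rightarrow> 'e2::ab_group_add \<Rightarrow> 'e2" and se3 :: "complex \<Rightarrow> 'e3::ab_group_add \<Rightarrow> 'e3"
  assumes V2: "vector_space se2" and V3: "vector_space se3"
    and G: "Vector_Spaces.linear se2 se3 g"
    and ghom: "\<forall>h v. g (rho2 h v) = rho3 h (g v)"
    and L2: "\<forall>h. Vector_Spaces.linear se2 se2 (rho2 h)"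
    and fin: "finite K"
  shows "\<forall>z u0 w. u0 \<in> weight_space se2 rho2 t (\<lambda>_. 0) \<and>
      (\<forall>k\<in>K. z k \<in> weight_space se2 rho2 t (mu k) \<and> (\<exists>h\<in>t. mu k h \<noteq> 0)) \<and>
      w \<in> weight_space se3 rho3 t (\<lambda>_. 0) \<and> g (u0 + sum z K) = w \<longrightarrow>
      (\<exists>v. v \<in> weight_space se2 rho2 t (\<lambda>_. 0) \<and> g v = w)"
  using fin
proof (induction K rule: finite_induct)
  case empty
  then show ?case by auto
next
  case (insert k K)
  interpret V2: vector_space se2 by (rule V2)
  interpret V3: vector_space se3 by (rule V3)
  have gad: "g (x + y) = g x + g y" "g (se2 c x) = se3 c (g x)" for x y c
    using G by (auto simp: Vector_Spaces.linear_iff)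
  interpret GA: additive g by unfold_locales (rule gad(1))
  have gdiff: "g (x - y) = g x - g y" for x y
    by (rule GA.diff)
  have rad: "rho2 h (x + y) = rho2 h x + rho2 h y" for h x y
    using L2 by (auto simp: Vector_Spaces.linear_iff)
  have rsum: "rho2 h (sum F A) = (\<Sum>a\<in>A. rho2 h (F a))" for h and F :: "'x \<Rightarrow> 'e2" and A
  proof -
    interpret RA: additive "rho2 h" by unfold_locales (rule rad)
    show ?thesis by (rule RA.sum)
  qed
  show ?case
  proof (intro allI impI, elim conjE)
    fix z u0 w
    assume u0: "u0 \<in> weight_space se2 rho2 t (\<lambda>_. 0)"
      and zk: "\<forall>j\<in>insert k K. z j \<in> weight_space se2 rho2 t (mu j) \<and> (\<exists>h\<in>t. mu j h \<noteq> 0)"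
      and w: "w \<in> weight_space se3 rho3 t (\<lambda>_. 0)"
      and gS: "g (u0 + sum z (insert k K)) = w"
    obtain h where h: "h \<in> t" "mu k h \<noteq> 0" using zk by auto
    define a where "a = mu k h"
    have anz: "a \<noteq> 0" using h a_def by simp
    define S where "S = u0 + sum z (insert k K)"
    have Sexp: "S = u0 + z k + sum z K" unfolding S_def using insert by (simp add: add.assoc)
    have rz: "rho2 h (z j) = se2 (mu j h) (z j)" if "j \<in> insert k K" for j
      using zk that h(1) unfolding weight_space_def by auto
    have ru0: "rho2 h u0 = 0" using u0 h(1) unfolding weight_space_def by auto
    have rw: "rho3 h w = 0" using w h(1) unfolding weight_space_def by auto
    have rS: "rho2 h S = se2 a (z k) + (\<Sum>j\<in>K. se2 (mu j h) (z j))"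
      unfolding Sexp a_def by (simp add: rad rsum ru0 rz)
    have sS: "se2 a S = se2 a u0 + se2 a (z k) + (\<Sum>j\<in>K. se2 a (z j))"
      unfolding Sexp by (simp add: V2.scale_right_distrib V2.scale_sum_right)
    have dS: "se2 a S - rho2 h S = se2 a u0 + (\<Sum>j\<in>K. se2 (a - mu j h) (z j))"
      unfolding sS rS by (simp add: V2.scale_left_diff_distrib sum_subtractf)
    have g1: "g (se2 a S - rho2 h S) = se3 a w"
      using gS ghom rw unfolding S_def[symmetric] gdiff gad by simp
    define z' where "z' j = se2 ((a - mu j h) / a) (z j)" for j
    have e: "se2 (1/a) (se2 a S - rho2 h S) = u0 + sum z' K"
      unfolding dS z'_def using anz by (simp add: V2.scale_right_distrib V2.scale_sum_right)
    have g2: "g (u0 + sum z' K) = w"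
      unfolding e[symmetric] gad g1 using anz by simp
    have z'K: "\<forall>j\<in>K. z' j \<in> weight_space se2 rho2 t (mu j) \<and> (\<exists>h\<in>t. mu j h \<noteq> 0)"
      using zk V2.subspace_scale[OF ws_subspace[OF V2 L2]] unfolding z'_def by auto
    show "\<exists>v. v \<in> weight_space se2 rho2 t (\<lambda>_. 0) \<and> g v = w"
      using insert.IH u0 z'K w g2 by blast
  qed
qed

theorem lemma2p3p2:
  fixes sc :: "complex \<Rightarrow> 'b::ab_group_add \<Rightarrow> 'b" and br :: "'b \<Rightarrow> 'b \<Rightarrow> 'b"
    and t :: "'b set" and R :: "('b \<Rightarrow> complex) set"
    and se1 :: "complex \<Rightarrow> 'e1::ab_group_add \<Rightarrow> 'e1" and rho1 :: "'b \<Rightarrow> 'e1 \<Rightarrow> 'e1"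
    and se2 :: "complex \<Rightarrow> 'e2::ab_group_add \<Rightarrow> 'e2" and rho2 :: "'b \<Rightarrow> 'e2 \<Rightarrow> 'e2"
    and se3 :: "complex \<Rightarrow> 'e3::ab_group_add \<Rightarrow> 'e3" and rho3 :: "'b \<Rightarrow> 'e3 \<Rightarrow> 'e3"
    and f :: "'e1 \<Rightarrow> 'e2" and g :: "'e2 \<Rightarrow> 'e3"
  assumes lie: "lie_algebra sc br"
    and bI: "borel_type sc br t R"
    and M1: "lie_module sc br se1 rho1" and W1: "weight_module se1 rho1 t"
    and M2: "lie_module sc br se2 rho2" and W2: "weight_module se2 rho2 t"
    and M3: "lie_module sc br se3 rho3" and W3: "weight_module se3 rho3 t"
    and hf: "lie_module_hom se1 rho1 se2 rho2 f"
    and hg: "lie_module_hom se2 rho2 se3 rho3 g"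
    and f_inj: "inj f"
    and exact: "range f = {v. g v = 0}"
    and g_surj: "surj g"
    and no_weight: "\<And>lam. is_weight se1 rho1 t lam \<Longrightarrow>
                      \<not> (\<exists>alpha\<in>insert (\<lambda>_. 0) R. eq_on t lam alpha)"
  shows "bij_betw g (invariants rho2) (invariants rho3)"
  proof -
  have Vsc: "vector_space sc" using lie unfolding lie_algebra_def by auto
  have V1: "vector_space se1" and L1: "\<forall>h. Vector_Spaces.linear se1 se1 (rho1 h)"
    and r1add: "\<forall>x y v. rho1 (x + y) v = rho1 x v + rho1 y v"
    using M1 unfolding lie_module_def by auto
  have V2: "vector_space se2" and L2: "\<forall>h. Vector_Spaces.linear se2 se2 (rho2 h)"
    and r2add: "\<And>x y v. rho2 (x + y) v = rho2 x v + rho2 y v"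
    and r2sc: "\<And>c x v. rho2 (sc c x) v = se2 c (rho2 x v)"
    and r2br: "\<And>x y v. rho2 (br x y) v = rho2 x (rho2 y v) - rho2 y (rho2 x v)"
    using M2 unfolding lie_module_def by auto
  have V3: "vector_space se3" and L3: "\<forall>h. Vector_Spaces.linear se3 se3 (rho3 h)"
    using M3 unfolding lie_module_def by auto
  interpret Vsc: vector_space sc by (rule Vsc)
  interpret V1: vector_space se1 by (rule V1)
  interpret V2: vector_space se2 by (rule V2)
  interpret V3: vector_space se3 by (rule V3)
  have F: "Vector_Spaces.linear se1 se2 f" and fhom: "\<And>x v. f (rho1 x v) = rho2 x (f v)"
    using hf unfolding lie_module_hom_def by auto
  have G: "Vector_Spaces.linear se2 se3 g" and ghom: "\<And>x v. g (rho2 x v) = rho3 x (g v)"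
    using hg unfolding lie_module_hom_def by auto
  have fad: "f (x + y) = f x + f y" "f (se1 c x) = se2 c (f x)" for x y c
    using F by (auto simp: Vector_Spaces.linear_iff)
  have gad: "g (x + y) = g x + g y" "g (se2 c x) = se3 c (g x)" for x y c
    using G by (auto simp: Vector_Spaces.linear_iff)
  interpret FA: additive f by unfold_locales (rule fad(1))
  interpret GA: additive g by unfold_locales (rule gad(1))
  have r2lin: "rho2 h (x + y) = rho2 h x + rho2 h y" "rho2 h (se2 c x) = se2 c (rho2 h x)" for h x y c
    using L2 by (auto simp: Vector_Spaces.linear_iff)
  have r3lin: "rho3 h (x + y) = rho3 h x + rho3 h y" for h x y
    using L3 by (auto simp: Vector_Spaces.linear_iff)
  have r1lin: "rho1 h (x + y) = rho1 h x + rho1 h y" for h x y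
    using L1 by (auto simp: Vector_Spaces.linear_iff)
  have r2z: "rho2 h 0 = 0" for h using r2lin(1)[of h 0 0] by simp
  have r3z: "rho3 h 0 = 0" for h using r3lin[of h 0 0] by simp
  have r1z: "rho1 h 0 = 0" for h using r1lin[of h 0 0] by simp
  have r2diff: "rho2 h (x - y) = rho2 h x - rho2 h y" for h x y
  proof -
    interpret RA: additive "rho2 h" by unfold_locales (rule r2lin(1))
    show ?thesis by (rule RA.diff)
  qed
  have f0: "f 0 = 0" by (rule FA.zero)
  have finj: "f x = f y \<Longrightarrow> x = y" for x y using f_inj by (auto dest: injD)
  have gker: "g v = 0 \<Longrightarrow> \<exists>u. v = f u" for v using exact by (metis (mono_tags) mem_Collect_eq rangeE)
  have noW: "u = 0" if "alpha \<in> insert (\<lambda>_. 0) R" "u \<in> weight_space se1 rho1 t alpha" for u alpha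
  proof (rule ccontr)
    assume "u \<noteq> 0"
    then have "is_weight se1 rho1 t alpha" using that unfolding is_weight_def by auto
    moreover have "\<exists>a\<in>insert (\<lambda>_. 0) R. eq_on t alpha a"
      using that(1) unfolding eq_on_def by (intro bexI[of _ alpha]) auto
    ultimately show False using no_weight by blast
  qed
  have img: "g ` invariants rho2 \<subseteq> invariants rho3"
    unfolding invariants_def by (auto simp: ghom[symmetric] GA.zero)
  have inj: "inj_on g (invariants rho2)"
  proof (rule inj_onI)
    fix v v' assume v: "v \<in> invariants rho2" and v': "v' \<in> invariants rho2" and e: "g v = g v'"
    have "g (v - v') = 0" using e by (simp add: GA.diff)
    then obtain u where u: "v - v' = f u" using gker by blast
    have "rho1 x u = 0" for x
    proof -
      have "f (rho1 x u) = rho2 x (v - v')" by (simp add: fhom u)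
      also have "\<dots> = 0" using v v' unfolding invariants_def by (simp add: r2diff)
      finally show ?thesis using f0 finj by metis
    qed
    then have "u \<in> weight_space se1 rho1 t (\<lambda>_. 0)" unfolding weight_space_def by simp
    then have "u = 0" using noW by blast
    then show "v = v'" using u f0 by simp
  qed
  have surj: "invariants rho3 \<subseteq> g ` invariants rho2"
  proof
    fix w assume w: "w \<in> invariants rho3"
    have w0: "w \<in> weight_space se3 rho3 t (\<lambda>_. 0)" using w unfolding invariants_def weight_space_def by simp
    obtain v where gv: "g v = w" using g_surj by (metis surjD)
    have "v \<in> V2.span (\<Union>lam. weight_space se2 rho2 t lam)" using W2 unfolding weight_module_def by simp
    then obtain T r where T: "finite T" "T \<subseteq> (\<Union>lam. weight_space se2 rho2 t lam)"
      and vT: "v = (\<Sum>a\<in>T. se2 (r a) a)"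
      unfolding V2.span_explicit by blast
    have "\<forall>a\<in>T. \<exists>lam. a \<in> weight_space se2 rho2 t lam" using T(2) by blast
    then obtain mu where mu: "\<And>a. a \<in> T \<Longrightarrow> a \<in> weight_space se2 rho2 t (mu a)" by metis
    define T0 where "T0 = {a\<in>T. \<forall>h\<in>t. mu a h = 0}"
    define T1 where "T1 = T - T0"
    define z where "z a = se2 (r a) a" for a
    have WS: "V2.subspace (weight_space se2 rho2 t lam)" for lam by (rule ws_subspace[OF V2 L2])
    have zw: "z a \<in> weight_space se2 rho2 t (mu a)" if "a \<in> T" for a
      unfolding z_def using V2.subspace_scale[OF WS mu[OF that]] .
    have u0: "sum z T0 \<in> weight_space se2 rho2 t (\<lambda>_. 0)"
    proof (rule V2.subspace_sum[OF WS])
      fix a assume a: "a \<in> T0"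
      then have "z a \<in> weight_space se2 rho2 t (mu a)" using zw T0_def by auto
      then show "z a \<in> weight_space se2 rho2 t (\<lambda>_. 0)" using a unfolding T0_def weight_space_def by auto
    qed
    have vsplit: "v = sum z T0 + sum z T1"
      unfolding vT z_def T1_def using T(1) by (metis (no_types, lifting) T0_def mem_Collect_eq subsetI sum.subset_diff add.commute)
    have z1: "\<forall>k\<in>T1. z k \<in> weight_space se2 rho2 t (mu k) \<and> (\<exists>h\<in>t. mu k h \<noteq> 0)"
      using zw unfolding T1_def T0_def by auto
    have "finite T1" using T(1) unfolding T1_def by simp
    from key[OF V2 V3 G _ L2 this, of rho3 t mu] ghom u0 z1 w0 gv vsplit
    obtain v0 where v0: "v0 \<in> weight_space se2 rho2 t (\<lambda>_. 0)" "g v0 = w" by blast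
    define U where "U = {x. rho2 x v0 = 0}"
    have r20: "rho2 0 v = 0" for v using r2add[of 0 0 v] by simp
    have Usub: "Vsc.subspace U"
      unfolding Vsc.subspace_def U_def by (auto simp: r20 r2add r2sc)
    have tU: "t \<subseteq> U" using v0(1) unfolding U_def weight_space_def by auto
    have rU: "root_space sc br t alpha \<subseteq> U" if al: "alpha \<in> R" for alpha
    proof
      fix x assume x: "x \<in> root_space sc br t alpha"
      define y where "y = rho2 x v0"
      have "g y = rho3 x w" unfolding y_def ghom v0(2) ..
      also have "\<dots> = 0" using w unfolding invariants_def by simp
      finally obtain u where u: "y = f u" using gker by blast
      have "rho1 h u = se1 (alpha h) u" if h: "h \<in> t" for h
      proof -
        have v0h: "rho2 h v0 = 0" using v0(1) h unfolding weight_space_def by simp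
        have bx: "br h x = sc (alpha h) x" using x h unfolding root_space_def by simp
        have "rho2 h y = se2 (alpha h) y"
          using r2br[of h x v0] unfolding bx r2sc v0h r2z y_def by simp
        then have "f (rho1 h u) = f (se1 (alpha h) u)" by (simp add: fhom fad u)
        then show ?thesis by (rule finj)
      qed
      then have "u \<in> weight_space se1 rho1 t alpha" unfolding weight_space_def by simp
      then have "u = 0" using noW al by blast
      then show "x \<in> U" using u f0 unfolding U_def y_def by simp
    qed
    have span: "Vsc.span (t \<union> (\<Union>alpha\<in>R. root_space sc br t alpha)) = UNIV"
      using bI unfolding borel_type_def by simp
    have "Vsc.span (t \<union> (\<Union>alpha\<in>R. root_space sc br t alpha)) \<subseteq> U"
      by (rule Vsc.span_minimal[OF _ Usub]) (use tU rU in blast)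
    then have "v0 \<in> invariants rho2" using span unfolding U_def invariants_def by auto
    then show "w \<in> g ` invariants rho2" using v0(2) by blast
  qed
  show ?thesis unfolding bij_betw_def using inj img surj by blast
qed

end
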